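(* For every finite item sequence $I=(a_1,\dots,a_n)\in(0,1]^n$, the algorithm $MM$ satisfies $MM(I)\le \frac{3}{2}\cdot OPT(I)+1$.
   Context: Classic bin packing: an item sequence $I=(a_1,\dots,a_n)\in(0,1]^n$ (item $i$ has size $a_i$) must be packed into bins of capacity $1$, i.e. one seeks an assignment $f:\{1,\dots,n\}\to\mathbb{N}$ with $\sum_{i:f(i)=j}a_i\le 1$ for every bin $j$; the cost is the number of non-empty bins. $OPT(I)$ is the minimum possible number of non-empty bins, and $ALG(I)$ denotes the number of non-empty bins in the assignment output by an algorithm $ALG$. Algorithm $MM$: sort $I$ in non-increasing order of size; keep a single open bin with current load $S$ (initially a new empty bin). Repeat while items remain: if the largest remaining item (head) fits, i.e. $S+\text{head}\le1$, pack it into the open bin; otherwise, if the smallest remaining item (tail) fits, pack it into the open bin; otherwise close the open bin permanently and open a new empty bin. *)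

theory Defs
  imports Complex_Main
begin

text \<open>Bin packing. An item sequence is a list I of reals; item i (0-based, i < length I)
  has size I ! i. A packing is an assignment f :: nat => nat of items to bins.\<close>

definition valid_packing :: "real list \<Rightarrow> (nat \<Rightarrow> nat) \<Rightarrow> bool" where
  "valid_packing I f \<longleftrightarrow>
     (\<forall>j. (\<Sum>i\<in>{i. i < length I \<and> f i = j}. I ! i) \<le> 1)"

definition num_bins :: "real list \<Rightarrow> (nat \<Rightarrow> nat) \<Rightarrow> nat" where
  "num_bins I f = card (f ` {..<length I})"

definition OPT :: "real list \<Rightarrow> nat" where
  "OPT I = (LEAST k. \<exists>f. valid_packing I f \<and> num_bins I f = k)"

text \<open>Algorithm MM on the remaining items xs (sorted non-increasingly) with current
  open bin B (list of its items). The last branch (empty open bin and the head does not fit)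
  is unreachable for items of size at most 1; it is only there to make the function total.\<close>
function mm_pack :: "real list \<Rightarrow> real list \<Rightarrow> real list list" where
  "mm_pack [] B = [B]"
| "mm_pack (x # xs) B =
     (if sum_list B + x \<le> 1 then mm_pack xs (B @ [x])
      else if sum_list B + last (x # xs) \<le> 1
        then mm_pack (butlast (x # xs)) (B @ [last (x # xs)])
      else if B \<noteq> [] then B # mm_pack (x # xs) []
      else [x # xs])"
  by pat_completeness auto
termination
  by (relation "measure (\<lambda>(xs, B). 2 * length xs + (if B = [] then 0 else 1))") auto

definition MM :: "real list \<Rightarrow> nat" where
  "MM I = length (filter (\<lambda>b. b \<noteq> []) (mm_pack (rev (sort I)) []))"

end

theory Submission
  imports Defs "HOL-Library.Multiset"
begin

lemma sorted_last_le: "sorted_wrt (\<ge>) (l::real list) \<Longrightarrow> y \<in> set l \<Longrightarrow> last l \<le> y"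
proof (induction l)
  case Nil then show ?case by simp
next
  case (Cons a l) then show ?case
    by (cases "l = []") auto
qed

lemma sorted_butlast: "sorted_wrt (\<ge>) (l::real list) \<Longrightarrow> sorted_wrt (\<ge>) (butlast l)"
  by (simp add: butlast_conv_take sorted_wrt_take)

lemma GL:
  "sorted_wrt (\<ge>) (xs::real list) \<Longrightarrow> \<exists>C ys.
     (mm_pack xs B = [B @ C] \<and> mset C = mset xs \<and> set C \<subseteq> set xs) \<or>
     (mm_pack xs B = (B @ C) # mm_pack ys [] \<and> mset C + mset ys = mset xs \<and> ys \<noteq> [] \<and>
      B @ C \<noteq> [] \<and> sorted_wrt (\<ge>) ys \<and> set ys \<subseteq> set xs \<and> set C \<subseteq> set xs \<and>
      (\<forall>y\<in>set ys. sum_list (B @ C) + y > 1))"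
proof (induction xs B rule: mm_pack.induct)
  case (1 B)
  then show ?case by (intro exI[of _ "[]"]) simp
next
  case (2 x xs B)
  show ?case
  proof (cases "sum_list B + x \<le> 1")
    case True
    have s0: "sorted_wrt (\<ge>) xs" using "2.prems" by simp
    from "2.IH"(1)[OF True s0] obtain C ys where h:
      "(mm_pack xs (B@[x]) = [(B@[x]) @ C] \<and> mset C = mset xs \<and> set C \<subseteq> set xs) \<or>
     (mm_pack xs (B@[x]) = ((B@[x]) @ C) # mm_pack ys [] \<and> mset C + mset ys = mset xs \<and> ys \<noteq> [] \<and>
      (B@[x]) @ C \<noteq> [] \<and> sorted_wrt (\<ge>) ys \<and> set ys \<subseteq> set xs \<and> set C \<subseteq> set xs \<and>
      (\<forall>y\<in>set ys. sum_list ((B@[x]) @ C) + y > 1))" by blast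
    show ?thesis
      using h
    proof (elim disjE)
      assume a: "mm_pack xs (B @ [x]) = [(B @ [x]) @ C] \<and> mset C = mset xs \<and> set C \<subseteq> set xs"
      show ?thesis
        apply (rule exI[of _ "x # C"], rule exI[of _ ys], rule disjI1)
        using a True by auto
    next
      assume a: "mm_pack xs (B @ [x]) = ((B @ [x]) @ C) # mm_pack ys [] \<and> mset C + mset ys = mset xs \<and> ys \<noteq> [] \<and>
      (B@[x]) @ C \<noteq> [] \<and> sorted_wrt (\<ge>) ys \<and> set ys \<subseteq> set xs \<and> set C \<subseteq> set xs \<and>
      (\<forall>y\<in>set ys. sum_list ((B@[x]) @ C) + y > 1)"
      show ?thesis
        apply (rule exI[of _ "x # C"], rule exI[of _ ys], rule disjI2)
        using a True by auto
    qed
  next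
    case F1: False
    show ?thesis
    proof (cases "sum_list B + last (x # xs) \<le> 1")
      case True
      have s: "sorted_wrt (\<ge>) (butlast (x # xs))" using "2.prems" sorted_butlast by blast
      from "2.IH"(2)[OF F1 True s] obtain C ys where h:
      "(mm_pack (butlast (x # xs)) (B@[last (x # xs)]) = [(B@[last (x # xs)]) @ C] \<and> mset C = mset (butlast (x # xs)) \<and> set C \<subseteq> set (butlast (x # xs))) \<or>
     (mm_pack (butlast (x # xs)) (B@[last (x # xs)]) = ((B@[last (x # xs)]) @ C) # mm_pack ys [] \<and> mset C + mset ys = mset (butlast (x # xs)) \<and> ys \<noteq> [] \<and>
      (B@[last (x # xs)]) @ C \<noteq> [] \<and> sorted_wrt (\<ge>) ys \<and> set ys \<subseteq> set (butlast (x # xs)) \<and> set C \<subseteq> set (butlast (x # xs)) \<and>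
      (\<forall>y\<in>set ys. sum_list ((B@[last (x # xs)]) @ C) + y > 1))" by blast
      have m: "mset (butlast (x # xs)) + {#last (x # xs)#} = mset (x # xs)"
        proof -
        have "mset (x#xs) = mset (butlast (x#xs) @ [last (x#xs)])"
          using append_butlast_last_id[of "x#xs"] by simp
        then show ?thesis by simp
      qed
      have sb: "set (butlast (x # xs)) \<subseteq> set (x # xs)" by (meson in_set_butlastD subsetI)
      have lx: "last (x # xs) \<in> set (x # xs)" by simp
      show ?thesis
        using h
      proof (elim disjE)
        assume a: "mm_pack (butlast (x # xs)) (B@[last (x # xs)]) = [(B@[last (x # xs)]) @ C] \<and> mset C = mset (butlast (x # xs)) \<and> set C \<subseteq> set (butlast (x # xs))"
        show ?thesis
          apply (rule exI[of _ "last (x # xs) # C"], rule exI[of _ ys], rule disjI1)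
          using a F1 True m sb lx by (auto simp: add_ac)
      next
        assume a: "mm_pack (butlast (x # xs)) (B@[last (x # xs)]) = ((B@[last (x # xs)]) @ C) # mm_pack ys [] \<and> mset C + mset ys = mset (butlast (x # xs)) \<and> ys \<noteq> [] \<and>
      (B@[last (x # xs)]) @ C \<noteq> [] \<and> sorted_wrt (\<ge>) ys \<and> set ys \<subseteq> set (butlast (x # xs)) \<and> set C \<subseteq> set (butlast (x # xs)) \<and>
      (\<forall>y\<in>set ys. sum_list ((B@[last (x # xs)]) @ C) + y > 1)"
        have m2: "mset (last (x # xs) # C) + mset ys = mset (x # xs)" using a m by (simp add: add_ac)
        show ?thesis
          apply (rule exI[of _ "last (x # xs) # C"], rule exI[of _ ys], rule disjI2)
          using a F1 True m2 sb lx by auto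
      qed
    next
      case False
      show ?thesis
      proof (cases "B \<noteq> []")
        case True
        show ?thesis
          apply (rule exI[of _ "[]"], rule exI[of _ "x # xs"], rule disjI2)
          using F1 False True "2.prems" sorted_last_le[OF "2.prems"] by fastforce
      next
        case B: False
        show ?thesis
          apply (rule exI[of _ "x # xs"], rule exI[of _ "[]"], rule disjI1)
          using F1 False B by simp
      qed
    qed
  qed
qed


definition NB :: "real list \<Rightarrow> nat" where
  "NB xs = length (filter (\<lambda>b. b \<noteq> []) (mm_pack xs []))"

lemma NB_Nil[simp]: "NB [] = 0" by (simp add: NB_def)

lemma sum_list_nonneg_set: "set C \<subseteq> set xs \<Longrightarrow> \<forall>x\<in>set xs. 0 < (x::real) \<Longrightarrow> 0 \<le> sum_list C"
  by (meson less_le_not_le subset_code(1) sum_list_nonneg)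

lemma stepB:
  assumes s: "sorted_wrt (\<ge>) (r::real list)" and B: "B \<noteq> []"
  shows "\<exists>C ys. length (filter (\<lambda>b. b \<noteq> []) (mm_pack r B)) = 1 + NB ys \<and>
      mset C + mset ys = mset r \<and> sorted_wrt (\<ge>) ys \<and> set ys \<subseteq> set r \<and> set C \<subseteq> set r \<and>
      (ys \<noteq> [] \<longrightarrow> (\<forall>y\<in>set ys. sum_list (B @ C) + y > 1))"
proof -
  obtain C ys where h: "(mm_pack r B = [B @ C] \<and> mset C = mset r \<and> set C \<subseteq> set r) \<or>
     (mm_pack r B = (B @ C) # mm_pack ys [] \<and> mset C + mset ys = mset r \<and> ys \<noteq> [] \<and>
      B @ C \<noteq> [] \<and> sorted_wrt (\<ge>) ys \<and> set ys \<subseteq> set r \<and> set C \<subseteq> set r \<and>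
      (\<forall>y\<in>set ys. sum_list (B @ C) + y > 1))"
    using GL[OF s, of B] by blast
  then show ?thesis
  proof (elim disjE)
    assume a: "mm_pack r B = [B @ C] \<and> mset C = mset r \<and> set C \<subseteq> set r"
    show ?thesis
      apply (rule exI[of _ C], rule exI[of _ "[]"])
      using a B by simp
  next
    assume a: "mm_pack r B = (B @ C) # mm_pack ys [] \<and> mset C + mset ys = mset r \<and> ys \<noteq> [] \<and>
      B @ C \<noteq> [] \<and> sorted_wrt (\<ge>) ys \<and> set ys \<subseteq> set r \<and> set C \<subseteq> set r \<and>
      (\<forall>y\<in>set ys. sum_list (B @ C) + y > 1)"
    show ?thesis
      apply (rule exI[of _ C], rule exI[of _ ys])
      using a B by (simp add: NB_def)
  qed
qed


lemma step:
  assumes s: "sorted_wrt (\<ge>) (xs::real list)" and ne: "xs \<noteq> []"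
    and pos: "\<forall>x\<in>set xs. 0 < x \<and> x \<le> 1"
  shows "\<exists>B1 ys. hd xs \<in> set B1 \<and> NB xs = 1 + NB ys \<and> mset B1 + mset ys = mset xs \<and>
     sorted_wrt (\<ge>) ys \<and> set ys \<subseteq> set xs \<and>
     (ys \<noteq> [] \<longrightarrow> (\<forall>y\<in>set ys. sum_list B1 + y > 1)) \<and>
     (hd xs \<le> 1/2 \<and> ys \<noteq> [] \<longrightarrow> 2 \<le> length B1 \<and> sum_list B1 > 2/3)"
proof -
  obtain x1 r where xs: "xs = x1 # r" using ne by (cases xs) auto
  have x1: "0 < x1" "x1 \<le> 1" using pos xs by auto
  have sr: "sorted_wrt (\<ge>) r" using s xs by simp
  show ?thesis
  proof (cases "x1 > 1/2 \<or> r = []")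
    case True
    have mm: "mm_pack xs [] = mm_pack r [x1]" using xs x1 by simp
    obtain C ys where h: "length (filter (\<lambda>b. b \<noteq> []) (mm_pack r [x1])) = 1 + NB ys \<and>
      mset C + mset ys = mset r \<and> sorted_wrt (\<ge>) ys \<and> set ys \<subseteq> set r \<and> set C \<subseteq> set r \<and>
      (ys \<noteq> [] \<longrightarrow> (\<forall>y\<in>set ys. sum_list ([x1] @ C) + y > 1))"
      using stepB[OF sr, of "[x1]"] by blast
    show ?thesis
      apply (rule exI[of _ "x1 # C"], rule exI[of _ ys])
      using h mm True xs by (auto simp: NB_def)
  next
    case False
    then obtain x2 r' where r: "r = x2 # r'" and x1h: "x1 \<le> 1/2" by (cases r) auto
    have x2: "0 < x2" "x2 \<le> x1" using pos s xs r by auto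
    have mm: "mm_pack xs [] = mm_pack r' [x1, x2]" using xs r x1 x1h x2 by simp
    have sr': "sorted_wrt (\<ge>) r'" using sr r by simp
    obtain C ys where h: "length (filter (\<lambda>b. b \<noteq> []) (mm_pack r' [x1, x2])) = 1 + NB ys \<and>
      mset C + mset ys = mset r' \<and> sorted_wrt (\<ge>) ys \<and> set ys \<subseteq> set r' \<and> set C \<subseteq> set r' \<and>
      (ys \<noteq> [] \<longrightarrow> (\<forall>y\<in>set ys. sum_list ([x1, x2] @ C) + y > 1))"
      using stepB[OF sr', of "[x1, x2]"] by blast
    have C0: "0 \<le> sum_list C" 
      using sum_list_nonneg_set[of C r'] h pos xs r by auto
    have big: "sum_list (x1 # x2 # C) > 2/3" if yne: "ys \<noteq> []"
    proof -
      obtain y where y: "y \<in> set ys" using yne by (cases ys) auto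
      have y1: "sum_list ([x1, x2] @ C) + y > 1" using h yne y by blast
      have yr: "y \<in> set r'" using h y by blast
      have "y \<le> x2" using sr r yr by auto
      then show ?thesis using y1 C0 x2 by simp
    qed
    show ?thesis
      apply (rule exI[of _ "x1 # x2 # C"], rule exI[of _ ys])
      using h mm xs r big by (auto simp: NB_def)
  qed
qed


lemma mset_sum: "mset a + mset b = mset c \<Longrightarrow> sum_list a + sum_list b = (sum_list c::real)"
  by (metis sum_mset_sum_list sum_mset.union)

lemma mset_len: "mset a + mset b = mset c \<Longrightarrow> length a + length b = length c"
  by (metis size_mset size_union)

lemma mset_cnt: "mset a + mset b = mset c \<Longrightarrow>
   length (filter P a) + length (filter P b) = length (filter P c)"
  by (metis mset_filter size_mset size_union filter_union_mset)

lemma hd_in_len: "hd xs \<in> set B1 \<Longrightarrow> mset B1 + mset ys = mset xs \<Longrightarrow> length ys < length xs"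
  using mset_len[of B1 ys xs] by (cases B1) auto

lemma lemA:
  assumes "sorted_wrt (\<ge>) (xs::real list)" "\<forall>x\<in>set xs. 0 < x \<and> x \<le> 1/2"
  shows "real (NB xs) \<le> 3/2 * sum_list xs + 1"
  using assms
proof (induction "length xs" arbitrary: xs rule: less_induct)
  case less
  show ?case
  proof (cases "xs = []")
    case True then show ?thesis by simp
  next
    case ne: False
    have pos: "\<forall>x\<in>set xs. 0 < x \<and> x \<le> 1" using less.prems by auto
    obtain B1 ys where h: "hd xs \<in> set B1 \<and> NB xs = 1 + NB ys \<and> mset B1 + mset ys = mset xs \<and>
     sorted_wrt (\<ge>) ys \<and> set ys \<subseteq> set xs \<and>
     (ys \<noteq> [] \<longrightarrow> (\<forall>y\<in>set ys. sum_list B1 + y > 1)) \<and>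
     (hd xs \<le> 1/2 \<and> ys \<noteq> [] \<longrightarrow> 2 \<le> length B1 \<and> sum_list B1 > 2/3)"
      using step[OF less.prems(1) ne pos] by blast
    have hd: "hd xs \<le> 1/2" using less.prems ne by auto
    have len: "length ys < length xs" using h hd_in_len by blast
    have sm: "sum_list B1 + sum_list ys = sum_list xs" using h mset_sum by blast
    have B0: "0 \<le> sum_list B1" using sum_list_nonneg_set[of B1 xs] h pos
      by (metis mset_subset_eq_add_left set_mset_mono set_mset_mset)
    have y0: "0 \<le> sum_list ys" using sum_list_nonneg_set[of ys xs] h pos by blast
    show ?thesis
    proof (cases "ys = []")
      case True
      then show ?thesis using h B0 sm by simp
    next
      case False
      have IH: "real (NB ys) \<le> 3/2 * sum_list ys + 1"
        using less.hyps[OF len] h less.prems(2) by blast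
      have "sum_list B1 > 2/3" using h hd False by blast
      then show ?thesis using IH h sm by simp
    qed
  qed
qed


lemma cnt_pos: "x \<in> set B \<Longrightarrow> P x \<Longrightarrow> 1 \<le> length (filter P B)"
  by (metis One_nat_def Suc_leI filter_empty_conv length_greater_0_conv)

lemma hd_max: "sorted_wrt (\<ge>) (xs::real list) \<Longrightarrow> x \<in> set xs \<Longrightarrow> x \<le> hd xs"
  by (cases xs) auto

lemma lemB:
  assumes "sorted_wrt (\<ge>) (xs::real list)" "\<forall>x\<in>set xs. 1/3 < x \<and> x \<le> 1"
  shows "2 * NB xs \<le> length (filter (\<lambda>x. x > 1/2) xs) + length xs + 1"
  using assms
proof (induction "length xs" arbitrary: xs rule: less_induct)
  case less
  show ?case
  proof (cases "xs = []")
    case True then show ?thesis by simp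
  next
    case ne: False
    have pos: "\<forall>x\<in>set xs. 0 < x \<and> x \<le> 1" using less.prems by auto
    obtain B1 ys where h: "hd xs \<in> set B1 \<and> NB xs = 1 + NB ys \<and> mset B1 + mset ys = mset xs \<and>
     sorted_wrt (\<ge>) ys \<and> set ys \<subseteq> set xs \<and>
     (ys \<noteq> [] \<longrightarrow> (\<forall>y\<in>set ys. sum_list B1 + y > 1)) \<and>
     (hd xs \<le> 1/2 \<and> ys \<noteq> [] \<longrightarrow> 2 \<le> length B1 \<and> sum_list B1 > 2/3)"
      using step[OF less.prems(1) ne pos] by blast
    have len: "length ys < length xs" using h hd_in_len by blast
    have l: "length B1 + length ys = length xs" using h mset_len by blast
    have c: "length (filter (\<lambda>x. x > 1/2) B1) + length (filter (\<lambda>x. x > 1/2) ys) =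
       length (filter (\<lambda>x. x > (1/2::real)) xs)" using h by (intro mset_cnt) blast
    show ?thesis
    proof (cases "ys = []")
      case True
      have "1 \<le> length xs" using ne by (cases xs) auto
      then show ?thesis using h True by simp
    next
      case False
      have IH: "2 * NB ys \<le> length (filter (\<lambda>x. x > 1/2) ys) + length ys + 1"
      proof -
        have sy: "set ys \<subseteq> set xs" and so: "sorted_wrt (\<ge>) ys" using h by blast+
        have "\<forall>x\<in>set ys. 1/3 < x \<and> x \<le> 1" using sy less.prems(2) by (meson subsetD)
        then show ?thesis using less.hyps[OF len so] by blast
      qed
      have "length (filter (\<lambda>x. x > (1/2::real)) B1) + length B1 \<ge> 2"
      proof (cases "hd xs > 1/2")
        case True
        then have "1 \<le> length (filter (\<lambda>x. x > (1/2::real)) B1)" using cnt_pos[of "hd xs" B1 "\<lambda>x. x > (1/2::real)"] h by blast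
        moreover have "1 \<le> length B1" using h by (cases B1) auto
        ultimately show ?thesis by simp
      next
        case f: False
        then have "2 \<le> length B1" using h False by linarith
        then show ?thesis by linarith
      qed
      moreover have "NB xs = 1 + NB ys" using h by blast
      ultimately show ?thesis using IH l c by linarith
    qed
  qed
qed

lemma lemMain:
  assumes "sorted_wrt (\<ge>) (xs::real list)" "\<forall>x\<in>set xs. 0 < x \<and> x \<le> 1"
  shows "real (NB xs) \<le> 3/2 * sum_list xs + 1 \<or>
    2 * NB xs \<le> length (filter (\<lambda>x. x > 1/2) xs) + length (filter (\<lambda>x. x > 1/3) xs) + 1"
  using assms
proof (induction "length xs" arbitrary: xs rule: less_induct)
  case less
  show ?case
  proof (cases "xs = []")
    case True then show ?thesis by simp
  next
    case ne: False
    have pos: "\<forall>x\<in>set xs. 0 < x \<and> x \<le> 1" using less.prems by auto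
    show ?thesis
    proof (cases "hd xs \<le> 1/2")
      case True
      have "\<forall>x\<in>set xs. 0 < x \<and> x \<le> 1/2" using True hd_max[OF less.prems(1)] pos by fastforce
      then show ?thesis using lemA[OF less.prems(1)] by blast
    next
      case hdbig: False
    obtain B1 ys where h: "hd xs \<in> set B1 \<and> NB xs = 1 + NB ys \<and> mset B1 + mset ys = mset xs \<and>
     sorted_wrt (\<ge>) ys \<and> set ys \<subseteq> set xs \<and>
     (ys \<noteq> [] \<longrightarrow> (\<forall>y\<in>set ys. sum_list B1 + y > 1)) \<and>
     (hd xs \<le> 1/2 \<and> ys \<noteq> [] \<longrightarrow> 2 \<le> length B1 \<and> sum_list B1 > 2/3)"
      using step[OF less.prems(1) ne pos] by blast
    have len: "length ys < length xs" using h hd_in_len by blast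
    have sm: "sum_list B1 + sum_list ys = sum_list xs" using h mset_sum by blast
    have B0: "0 \<le> sum_list B1" using sum_list_nonneg_set[of B1 xs] h pos
      by (metis mset_subset_eq_add_left set_mset_mono set_mset_mset)
    have y0: "0 \<le> sum_list ys" using sum_list_nonneg_set[of ys xs] h pos by blast
    have c: "length (filter (\<lambda>x. x > 1/2) B1) + length (filter (\<lambda>x. x > 1/2) ys) =
       length (filter (\<lambda>x. x > (1/2::real)) xs)" using h by (intro mset_cnt) blast
    have c3: "length (filter (\<lambda>x. x > 1/3) B1) + length (filter (\<lambda>x. x > 1/3) ys) =
       length (filter (\<lambda>x. x > (1/3::real)) xs)" using h by (intro mset_cnt) blast
    have L1: "1 \<le> length (filter (\<lambda>x. x > (1/2::real)) B1)" using cnt_pos[of "hd xs" B1 "\<lambda>x. x > (1/2::real)"] h hdbig by force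
    have X1: "1 \<le> length (filter (\<lambda>x. x > (1/3::real)) B1)" using cnt_pos[of "hd xs" B1 "\<lambda>x. x > (1/3::real)"] h hdbig by force
    show ?thesis
    proof (cases "ys = []")
      case True
      then show ?thesis using h B0 sm by simp
    next
      case yne: False
      show ?thesis
      proof (cases "sum_list B1 \<le> 2/3")
        case True
        have gt: "\<forall>y\<in>set ys. 1/3 < y \<and> y \<le> 1" using h yne True pos by fastforce
        have "2 * NB ys \<le> length (filter (\<lambda>x. x > 1/2) ys) + length ys + 1"
        proof -
          have so: "sorted_wrt (\<ge>) ys" using h by blast
          show ?thesis using lemB[OF so gt] .
        qed
        moreover have "length (filter (\<lambda>x. x > (1/3::real)) ys) = length ys"
          using gt by (simp add: filter_id_conv[THEN iffD2])
        moreover have "NB xs = 1 + NB ys" using h by blast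
        ultimately show ?thesis using c c3 L1 X1 by linarith
      next
        case False
        have IH: "real (NB ys) \<le> 3/2 * sum_list ys + 1 \<or>
          2 * NB ys \<le> length (filter (\<lambda>x. x > 1/2) ys) + length (filter (\<lambda>x. x > 1/3) ys) + 1"
        proof -
          have sy: "set ys \<subseteq> set xs" and so: "sorted_wrt (\<ge>) ys" using h by blast+
          have "\<forall>x\<in>set ys. 0 < x \<and> x \<le> 1" using sy pos by (meson subsetD)
          then show ?thesis using less.hyps[OF len so] by blast
        qed
        then show ?thesis
        proof
          assume "real (NB ys) \<le> 3/2 * sum_list ys + 1"
          then show ?thesis using h sm False by simp
        next
          assume "2 * NB ys \<le> length (filter (\<lambda>x. x > 1/2) ys) + length (filter (\<lambda>x. x > 1/3) ys) + 1"
          moreover have "NB xs = 1 + NB ys" using h by blast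
          ultimately show ?thesis using c c3 L1 X1 by linarith
        qed
      qed
    qed
  qed
  qed
qed


lemma opt_sum:
  assumes v: "valid_packing I f"
  shows "sum_list I \<le> real (num_bins I f)"
proof -
  let ?S = "{..<length I}"
  have "sum_list I = (\<Sum>i\<in>?S. I ! i)" by (simp add: sum_list_sum_nth atLeast0LessThan)
  also have "\<dots> = (\<Sum>j\<in>f ` ?S. \<Sum>i\<in>{x. x \<in> ?S \<and> f x = j}. I ! i)"
    by (rule sum.group[symmetric]) auto
  also have "\<dots> \<le> (\<Sum>j\<in>f ` ?S. 1)"
  proof (rule sum_mono)
    fix j
    have "{x. x \<in> ?S \<and> f x = j} = {i. i < length I \<and> f i = j}" by auto
    then show "(\<Sum>i\<in>{x. x \<in> ?S \<and> f x = j}. I ! i) \<le> 1"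
      using v unfolding valid_packing_def by simp
  qed
  also have "\<dots> = real (num_bins I f)" by (simp add: num_bins_def)
  finally show ?thesis .
qed

lemma opt_cnt:
  assumes v: "valid_packing I f" and pos: "\<forall>x\<in>set I. 0 < x"
    and t: "0 < t" and kt: "1 \<le> real (k + 1) * t"
  shows "length (filter (\<lambda>x. x > t) I) \<le> k * num_bins I f"
proof -
  let ?S = "{..<length I}"
  let ?P = "{i. i < length I \<and> I ! i > t}"
  have "length (filter (\<lambda>x. x > t) I) = card ?P" by (rule length_filter_conv_card)
  also have "\<dots> = (\<Sum>i\<in>?P. 1)" by simp
  also have "\<dots> = (\<Sum>j\<in>f ` ?S. \<Sum>i\<in>{x. x \<in> ?P \<and> f x = j}. 1)"
    by (rule sum.group[symmetric]) auto
  also have "\<dots> \<le> (\<Sum>j\<in>f ` ?S. k)"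
  proof (rule sum_mono)
    fix j
    let ?Q = "{x. x \<in> ?P \<and> f x = j}"
    have fin: "finite ?Q" by simp
    show "(\<Sum>i\<in>?Q. 1) \<le> k"
    proof (cases "?Q = {}")
      case True then show ?thesis by (simp only: True sum.empty)
    next
      case False
      have "(\<Sum>i\<in>?Q. t) < (\<Sum>i\<in>?Q. I ! i)"
        by (rule sum_strict_mono[OF fin False]) auto
      also have "\<dots> \<le> (\<Sum>i\<in>{i. i < length I \<and> f i = j}. I ! i)"
        by (rule sum_mono2) (use pos in \<open>auto simp: less_imp_le\<close>)
      also have "\<dots> \<le> 1" using v unfolding valid_packing_def by simp
      finally have "real (card ?Q) * t < 1" by simp
      then have "real (card ?Q) * t < real (k + 1) * t" using kt by linarith
      then have "real (card ?Q) < real (k + 1)" using t by (simp add: mult_less_cancel_right)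
      then show ?thesis by simp
    qed
  qed
  also have "\<dots> = k * num_bins I f" by (simp add: num_bins_def)
  finally show ?thesis .
qed

lemma opt_exists:
  assumes "\<forall>x\<in>set I. 0 < x \<and> x \<le> 1"
  shows "\<exists>f. valid_packing I f \<and> num_bins I f = OPT I"
proof -
  have "valid_packing I id"
    unfolding valid_packing_def
  proof
    fix j
    show "(\<Sum>i\<in>{i. i < length I \<and> id i = j}. I ! i) \<le> 1"
    proof (cases "j < length I")
      case True
      then have "{i. i < length I \<and> id i = j} = {j}" by auto
      then show ?thesis using assms True by simp
    next
      case False
      then have e: "{i. i < length I \<and> id i = j} = {}" by auto
      show ?thesis by (simp only: e sum.empty)
    qed
  qed
  then have "\<exists>k f. valid_packing I f \<and> num_bins I f = k" by blast
  then show ?thesis unfolding OPT_def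
    by (rule LeastI_ex[where P="\<lambda>k. \<exists>f. valid_packing I f \<and> num_bins I f = k"])
qed


theorem theorem1:
  fixes I :: "real list"
  assumes "\<forall>x\<in>set I. 0 < x \<and> x \<le> 1"
  shows "real (MM I) \<le> 3 / 2 * real (OPT I) + 1"
proof -
  define xs where "xs = rev (sort I)"
  have mm: "MM I = NB xs" by (simp add: MM_def NB_def xs_def)
  have so: "sorted_wrt (\<ge>) xs" unfolding xs_def
    by (simp add: sorted_wrt_rev)
  have m: "mset [] + mset xs = mset I" by (simp add: xs_def)
  have setx: "set xs = set I" by (simp add: xs_def)
  have pos: "\<forall>x\<in>set xs. 0 < x \<and> x \<le> 1" using assms setx by simp
  have ws: "sum_list xs = sum_list I" using mset_sum[OF m] by simp
  have c2: "length (filter (\<lambda>x. x > 1/2) xs) = length (filter (\<lambda>x. x > (1/2::real)) I)"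
    using mset_cnt[OF m, of "\<lambda>x. x > 1/2"] by simp
  have c3: "length (filter (\<lambda>x. x > 1/3) xs) = length (filter (\<lambda>x. x > (1/3::real)) I)"
    using mset_cnt[OF m, of "\<lambda>x. x > 1/3"] by simp
  obtain f where v: "valid_packing I f" and nf: "num_bins I f = OPT I"
    using opt_exists[OF assms] by blast
  have ipos: "\<forall>x\<in>set I. 0 < x" using assms by simp
  have W: "sum_list I \<le> real (OPT I)" using opt_sum[OF v] nf by simp
  have L: "length (filter (\<lambda>x. x > (1/2::real)) I) \<le> 1 * OPT I"
    using opt_cnt[OF v ipos, of "1/2" 1] nf by simp
  have X: "length (filter (\<lambda>x. x > (1/3::real)) I) \<le> 2 * OPT I"
    using opt_cnt[OF v ipos, of "1/3" 2] nf by simp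
  from lemMain[OF so pos] show ?thesis
  proof
    assume "real (NB xs) \<le> 3/2 * sum_list xs + 1"
    then show ?thesis using mm ws W by simp
  next
    assume a: "2 * NB xs \<le> length (filter (\<lambda>x. x > 1/2) xs) + length (filter (\<lambda>x. x > 1/3) xs) + 1"
    have "2 * NB xs \<le> 3 * OPT I + 1" using a c2 c3 L X by linarith
    then have "2 * real (NB xs) \<le> 3 * real (OPT I) + 1" by linarith
    then show ?thesis using mm by simp
  qed
qed

end
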